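(* Let $p=4k+1$ be a prime, let $J(k)=\sum_{i=1}^{4k-2}\big(\frac{i(i+1)(i+2)}{p}\big)$ and $d(k)=\frac{J(k)^2-4}{32}$, and let $S\subset\mathbb{P}^5$ be the surface over $\mathbb{F}_p$ defined by $x_1^2-x_2^2=x_3^2$, $x_0^2-x_1^2=x_4^2$, $x_0^2-x_2^2=x_5^2$. Then $$n_p(K_4)=\frac{k(k-1)(k-4)+2k\,d(k)}{24}\quad\text{if and only if}\quad |S(\mathbb{F}_p)|=(p+1)^2+J(k)^2 .$$
   Context: $\big(\frac{a}{p}\big)$ is the Legendre symbol. $n_p(K_4)$ is the number of $4$-tuples $(r_1,r_2,r_3,r_4)$ of pairwise distinct residues modulo $p$ such that all differences $r_i-r_j$ ($i\neq j$) are nonzero quadratic residues mod $p$, where tuples differing by a permutation of entries or by adding the same residue to all entries are identified. *)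

theory Defs
  imports "HOL-Number_Theory.Number_Theory" "HOL-Library.FuncSet"
begin

text \<open>Residues mod p are represented by the integers 0..p-1.\<close>

definition K4_sets :: "nat \<Rightarrow> int set set" where
  "K4_sets p = {A. A \<subseteq> {0..<int p} \<and> card A = 4 \<and>
     (\<forall>x\<in>A. \<forall>y\<in>A. x \<noteq> y \<longrightarrow> Legendre (x - y) (int p) = 1)}"

definition transl_rel :: "nat \<Rightarrow> (int set \<times> int set) set" where
  "transl_rel p = {(A, B). A \<in> K4_sets p \<and> B \<in> K4_sets p \<and>
     (\<exists>t::int. B = (\<lambda>x. (x + t) mod int p) ` A)}"

text \<open>Number of 4-cliques of the Paley graph up to permutation and translation.\<close>
definition n_K4 :: "nat \<Rightarrow> nat" where
  "n_K4 p = card (K4_sets p // transl_rel p)"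

definition J :: "nat \<Rightarrow> nat \<Rightarrow> int" where
  "J p k = (\<Sum>i = 1..4*k-2. Legendre (int i * (int i + 1) * (int i + 2)) (int p))"

definition d :: "nat \<Rightarrow> nat \<Rightarrow> rat" where
  "d p k = (of_int (J p k ^ 2) - 4) / 32"

definition S_vecs :: "nat \<Rightarrow> (nat \<Rightarrow> int) set" where
  "S_vecs p = {x \<in> PiE {0..5} (\<lambda>_. {0..<int p}). (\<exists>i\<in>{0..5}. x i \<noteq> 0) \<and>
     [x 1 ^ 2 - x 2 ^ 2 = x 3 ^ 2] (mod int p) \<and>
     [x 0 ^ 2 - x 1 ^ 2 = x 4 ^ 2] (mod int p) \<and>
     [x 0 ^ 2 - x 2 ^ 2 = x 5 ^ 2] (mod int p)}"

definition proj_rel :: "nat \<Rightarrow> ((nat \<Rightarrow> int) \<times> (nat \<Rightarrow> int)) set" where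
  "proj_rel p = {(x, y). x \<in> S_vecs p \<and> y \<in> S_vecs p \<and>
     (\<exists>c::int. \<not> int p dvd c \<and> y = (\<lambda>i\<in>{0..5}. (c * x i) mod int p))}"

definition card_S :: "nat \<Rightarrow> nat" where
  "card_S p = card (S_vecs p // proj_rel p)"

end

theory Submission
  imports Defs
begin
locale P4 =
  fixes p k :: nat
  assumes prime_p: "prime p" and pk: "p = 4 * k + 1"
begin

definition R :: "int set" where "R = {0..<int p}"
definition Q :: "int \<Rightarrow> bool" where "Q t \<longleftrightarrow> Legendre t (int p) = 1"
definition rho :: "int \<Rightarrow> int" where
  "rho t = (if t mod int p = 0 then 1 else if Q t then 2 else 0)"

lemma k_pos: "k \<ge> 1"
  using prime_p pk by (cases k) auto

lemma p_gt: "int p > 4" using k_pos pk by simp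

lemma prime_int: "prime (int p)" using prime_p by simp

lemma finR[simp]: "finite R" by (simp add: R_def)
lemma cardR: "card R = p" by (simp add: R_def)

lemma Legendre_cong:
  assumes "[a = b] (mod int p)" shows "Legendre a (int p) = Legendre b (int p)"
proof -
  have "QuadRes (int p) a = QuadRes (int p) b"
    unfolding QuadRes_def using assms cong_trans cong_sym by meson
  moreover have "[a = 0] (mod int p) = [b = 0] (mod int p)"
    using assms cong_trans cong_sym by meson
  ultimately show ?thesis unfolding Legendre_def by simp
qed

lemma Legendre_mod: "Legendre (a mod int p) (int p) = Legendre a (int p)"
  by (rule Legendre_cong) simp

lemma Legendre_vals: "Legendre a (int p) \<in> {-1,0,1}"
  unfolding Legendre_def by auto

lemma euler: "[Legendre a (int p) = a ^ (2*k)] (mod int p)"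
proof -
  have "(p - 1) div 2 = 2*k" using pk by simp
  moreover have "2 < p" using p_gt by simp
  ultimately show ?thesis using euler_criterion[OF prime_p, of a] by simp
qed

lemma small_dvd: "int p dvd x \<Longrightarrow> \<bar>x\<bar> < int p \<Longrightarrow> x = 0"
proof (rule ccontr)
  assume a: "int p dvd x" "\<bar>x\<bar> < int p" "x \<noteq> 0"
  then have "\<bar>int p\<bar> \<le> \<bar>x\<bar>" using dvd_imp_le_int by blast
  then show False using a by simp
qed

lemma Legendre_mult: "Legendre (a*b) (int p) = Legendre a (int p) * Legendre b (int p)"
proof -
  have "[Legendre (a*b) (int p) = (a*b)^(2*k)] (mod int p)" by (rule euler)
  moreover have "[Legendre a (int p) * Legendre b (int p) = a^(2*k) * b^(2*k)] (mod int p)"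
    using euler cong_mult by blast
  ultimately have "[Legendre (a*b) (int p) = Legendre a (int p) * Legendre b (int p)] (mod int p)"
    by (metis cong_sym cong_trans power_mult_distrib)
  then have "int p dvd Legendre (a*b) (int p) - Legendre a (int p) * Legendre b (int p)"
    by (simp add: cong_iff_dvd_diff)
  moreover have "\<bar>Legendre (a*b) (int p) - Legendre a (int p) * Legendre b (int p)\<bar> < int p"
    using Legendre_vals[of "a*b"] Legendre_vals[of a] Legendre_vals[of b] p_gt by (auto simp: insert_iff)
  ultimately have "Legendre (a*b) (int p) - Legendre a (int p) * Legendre b (int p) = 0"
    by (rule small_dvd)
  then show ?thesis by simp
qed

lemma Legendre_m1: "Legendre (-1) (int p) = 1"
proof -
  have "[Legendre (-1) (int p) = (-1)^(2*k)] (mod int p)" by (rule euler)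
  then have "[Legendre (-1) (int p) = 1] (mod int p)" by simp
  then have "int p dvd Legendre (-1) (int p) - 1" by (simp add: cong_iff_dvd_diff)
  moreover have "\<bar>Legendre (-1) (int p) - 1\<bar> < int p"
    using Legendre_vals[of "-1"] p_gt by auto
  ultimately have "Legendre (-1) (int p) - 1 = 0" by (rule small_dvd)
  then show ?thesis by simp
qed

lemma Legendre_neg: "Legendre (-a) (int p) = Legendre a (int p)"
  using Legendre_mult[of "-1" a] Legendre_m1 by simp

lemma Q_neg: "Q (-a) = Q a" by (simp add: Q_def Legendre_neg)

lemma Q_swap: "Q (a - b) = Q (b - a)" using Q_neg[of "b - a"] by simp

lemma Q_cong: "[a = b] (mod int p) \<Longrightarrow> Q a = Q b" by (simp add: Q_def Legendre_cong)

lemma Q_mod: "Q (a mod int p) = Q a" by (simp add: Q_def Legendre_mod)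

lemma Q_nz: "Q t \<Longrightarrow> \<not> int p dvd t"
  unfolding Q_def Legendre_def by (auto simp: cong_0_iff)

lemma Q_nz_mod: "Q t \<Longrightarrow> t mod int p \<noteq> 0"
  using Q_nz by auto

lemma Legendre_nQ: "\<not> int p dvd t \<Longrightarrow> \<not> Q t \<Longrightarrow> Legendre t (int p) = -1"
  unfolding Q_def using Legendre_vals[of t] by (auto simp: Legendre_def cong_0_iff)

lemma Q_mult: "Q a \<Longrightarrow> Q (a*b) = Q b"
  by (simp add: Q_def Legendre_mult)

lemma R_mod: "x \<in> R \<Longrightarrow> x mod int p = x" by (simp add: R_def)

lemma mod_in_R: "x mod int p \<in> R" using p_gt by (simp add: R_def)

lemma R_diff_dvd: "x \<in> R \<Longrightarrow> y \<in> R \<Longrightarrow> int p dvd (x - y) \<longleftrightarrow> x = y"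
proof
  assume a: "x \<in> R" "y \<in> R" "int p dvd (x - y)"
  then have "\<bar>x - y\<bar> < int p" unfolding R_def by auto
  then have "x - y = 0" using small_dvd a(3) by blast
  then show "x = y" by simp
qed simp

lemma R_cong: "x \<in> R \<Longrightarrow> y \<in> R \<Longrightarrow> [x = y] (mod int p) \<longleftrightarrow> x = y"
  by (simp add: R_diff_dvd cong_iff_dvd_diff)

lemma rho_cong: "[a = b] (mod int p) \<Longrightarrow> rho a = rho b"
proof -
  assume h: "[a = b] (mod int p)"
  then have "Q a = Q b" by (rule Q_cong)
  moreover have "a mod int p = b mod int p" using h by (simp add: cong_def)
  ultimately show ?thesis unfolding rho_def by simp
qed

lemma rho_mod: "rho (a mod int p) = rho a" by (rule rho_cong) simp

lemma rho_neg: "rho (-a) = rho a"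
  unfolding rho_def using Q_neg[of a] by (simp add: mod_eq_0_iff_dvd)

lemma prime_dvd_sq: "int p dvd y^2 \<Longrightarrow> int p dvd y"
  using prime_dvd_power[OF prime_int] by blast

lemma sqcount: "card {y\<in>R. [y^2 = t] (mod int p)} = rho t"
proof (cases "int p dvd t")
  case True
  have "{y\<in>R. [y^2 = t] (mod int p)} = {0}"
  proof safe
    fix y assume y: "y \<in> R" "[y^2 = t] (mod int p)"
    then have "int p dvd y^2" using True cong_dvd_iff[OF y(2)] by simp
    then have "int p dvd y - 0" using prime_dvd_sq by simp
    then show "y = 0" using R_diff_dvd[of y 0] y p_gt by (simp add: R_def)
  next
    show "0 \<in> R" using p_gt by (simp add: R_def)
    show "[0^2 = t] (mod int p)" unfolding cong_def using True by (simp add: dvd_eq_mod_eq_0)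
  qed
  then show ?thesis using True by (simp add: rho_def)
next
  case False
  show ?thesis
  proof (cases "Q t")
    case True
    then have "QuadRes (int p) t" using False
      by (auto simp: Q_def Legendre_def cong_0_iff split: if_splits)
    then obtain y0 where y0: "[y0^2 = t] (mod int p)" by (auto simp: QuadRes_def)
    define a where "a = y0 mod int p"
    have aR: "a \<in> R" by (simp add: a_def mod_in_R)
    have a2: "[a^2 = t] (mod int p)" using y0 unfolding a_def
      by (metis cong_def power_mod)
    have a0: "a \<noteq> 0" using a2 False cong_dvd_iff[of "a^2" t "int p"] by auto
    have bR: "int p - a \<in> R" using aR a0 by (auto simp: R_def)
    have b2: "[(int p - a)^2 = t] (mod int p)"
    proof -
      have "[(int p - a)^2 = (0 - a)^2] (mod int p)"
        by (intro cong_pow cong_diff) (auto simp: cong_0_iff)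
      then show ?thesis using a2 by (simp add: cong_trans)
    qed
    have ab: "a \<noteq> int p - a"
    proof
      assume "a = int p - a" then have "int p = 2 * a" by simp
      then show False using pk by presburger
    qed
    have "{y\<in>R. [y^2 = t] (mod int p)} \<subseteq> {a, int p - a}"
    proof
      fix y assume "y \<in> {y\<in>R. [y^2 = t] (mod int p)}"
      then have y: "y \<in> R" "[y^2 = t] (mod int p)" by auto
      then have "[y^2 = a^2] (mod int p)" using cong_trans[OF y(2) cong_sym[OF a2]] by simp
      then have "int p dvd (y - a) * (y + a)"
        by (simp add: cong_iff_dvd_diff power2_eq_square algebra_simps)
      then have "int p dvd (y - a) \<or> int p dvd (y + a)"
        using prime_int by (simp add: prime_dvd_mult_iff)
      moreover have "int p dvd (y + a) \<Longrightarrow> int p dvd (y - (int p - a))"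
      proof -
        assume "int p dvd (y + a)"
        then have "int p dvd (y + a) - int p" by (rule dvd_diff) simp
        then show ?thesis by (simp add: algebra_simps)
      qed
      ultimately have "int p dvd (y - a) \<or> int p dvd (y - (int p - a))" by blast
      then have "y = a \<or> y = int p - a" using R_diff_dvd[OF y(1) aR] R_diff_dvd[OF y(1) bR] by blast
      then show "y \<in> {a, int p - a}" by blast
    qed
    moreover have "{a, int p - a} \<subseteq> {y\<in>R. [y^2 = t] (mod int p)}"
      using aR bR a2 b2 by blast
    ultimately have "{y\<in>R. [y^2 = t] (mod int p)} = {a, int p - a}" by (rule antisym)
    then show ?thesis using ab True False by (simp add: rho_def mod_eq_0_iff_dvd)
  next
    case nQ: False
    have "\<not> QuadRes (int p) t" using nQ False
      by (auto simp: Q_def Legendre_def cong_0_iff)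
    then have "{y\<in>R. [y^2 = t] (mod int p)} = {}" by (auto simp: QuadRes_def)
    then show ?thesis using nQ False by (simp add: rho_def mod_eq_0_iff_dvd)
  qed
qed

lemma rho_Legendre: "rho t = 1 + Legendre t (int p)"
proof (cases "int p dvd t")
  case True
  then have "[t = 0] (mod int p)" by (simp add: cong_0_iff)
  then have "Legendre t (int p) = 0" by (simp add: Legendre_def)
  moreover have "rho t = 1" using True by (simp add: rho_def)
  ultimately show ?thesis by simp
next
  case False
  show ?thesis
  proof (cases "Q t")
    case True
    then show ?thesis using False by (simp add: rho_def Q_def dvd_eq_mod_eq_0)
  next
    case nQ: False
    then show ?thesis using False Legendre_nQ[of t] by (simp add: rho_def dvd_eq_mod_eq_0)
  qed
qed

lemma rho_R: "u \<in> R \<Longrightarrow> rho u = (if u = 0 then 1 else if Q u then 2 else 0)"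
  unfolding rho_def using R_mod[of u] by simp

lemma rho_Q: "Q u \<Longrightarrow> rho u = 2"
  using Q_nz_mod[of u] unfolding rho_def by simp

lemma rho_nQ: "\<not> int p dvd u \<Longrightarrow> \<not> Q u \<Longrightarrow> rho u = 0"
  unfolding rho_def by (simp add: dvd_eq_mod_eq_0)

lemma rho_0: "rho 0 = 1" by (simp add: rho_def)

lemma zero_R: "0 \<in> R" using p_gt by (simp add: R_def)

lemma Q_R_nz: "Q u \<Longrightarrow> u \<noteq> 0" using Q_nz[of u] by auto

lemma sum_sq_fiber: "(\<Sum>a\<in>R. F (a^2 mod int p)) = (\<Sum>u\<in>R. rho u * F u)"
proof -
  have "(\<Sum>a\<in>R. F (a^2 mod int p)) =
        (\<Sum>u\<in>R. \<Sum>a\<in>{a\<in>R. a^2 mod int p = u}. F (a^2 mod int p))"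
    by (rule sum.group[symmetric]) (auto simp: mod_in_R)
  also have "\<dots> = (\<Sum>u\<in>R. \<Sum>a\<in>{a\<in>R. [a^2 = u] (mod int p)}. F u)"
    by (intro sum.cong refl) (auto simp: cong_def R_mod)
  also have "\<dots> = (\<Sum>u\<in>R. rho u * F u)"
    by (simp add: sqcount)
  finally show ?thesis .
qed

lemma sum_rho: "(\<Sum>u\<in>R. rho u) = int p"
  using sum_sq_fiber[of "\<lambda>_. 1"] by (simp add: cardR)

lemma sum_Legendre: "(\<Sum>u\<in>R. Legendre u (int p)) = 0"
  using sum_rho by (simp add: rho_Legendre sum.distrib cardR)

lemma sum_ind: "(\<Sum>u\<in>A. if P u then c else 0) = c * int (card {u\<in>A. P u})" if "finite A"
  using that by (simp add: sum.If_cases Int_def conj_commute)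

lemma count_Q: "card {u\<in>R. Q u} = 2 * k"
proof -
  have "(\<Sum>u\<in>R. rho u) = rho 0 + (\<Sum>u\<in>R-{0}. rho u)"
    using zero_R by (simp add: sum.remove)
  also have "(\<Sum>u\<in>R-{0}. rho u) = (\<Sum>u\<in>R-{0}. if Q u then 2 else 0)"
    by (intro sum.cong refl) (auto simp: rho_R)
  also have "\<dots> = 2 * int (card {u\<in>R-{0}. Q u})" by (simp add: sum_ind)
  also have "{u\<in>R-{0}. Q u} = {u\<in>R. Q u}" using Q_R_nz by auto
  finally have "int p = 1 + 2 * int (card {u\<in>R. Q u})" using sum_rho rho_0 by simp
  then show ?thesis using pk by simp
qed

lemma shift_bij: "bij_betw (\<lambda>w. (a - w) mod int p) R R"
proof -
  have inj: "inj_on (\<lambda>w. (a - w) mod int p) R"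
  proof
    fix x y assume xy: "x \<in> R" "y \<in> R" "(a - x) mod int p = (a - y) mod int p"
    then have "[a - x = a - y] (mod int p)" by (simp add: cong_def)
    then have "int p dvd (x - y)" by (simp add: cong_iff_dvd_diff dvd_diff_commute)
    then show "x = y" using R_diff_dvd xy by blast
  qed
  moreover have "(\<lambda>w. (a - w) mod int p) ` R = R"
    by (rule endo_inj_surj) (use inj mod_in_R in auto)
  ultimately show ?thesis by (simp add: bij_betw_def)
qed

lemma sum_shift: "(\<Sum>w\<in>R. g ((a - w) mod int p)) = (\<Sum>w\<in>R. g w)"
  using sum.reindex_bij_betw[OF shift_bij, of g a] by simp

lemma scale_bij: assumes "\<not> int p dvd u" shows "bij_betw (\<lambda>w. (u * w) mod int p) R R"
proof -
  have inj: "inj_on (\<lambda>w. (u * w) mod int p) R"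
  proof
    fix x y assume xy: "x \<in> R" "y \<in> R" "(u * x) mod int p = (u * y) mod int p"
    then have "int p dvd u * (x - y)" by (metis mod_eq_dvd_iff right_diff_distrib)
    then have "int p dvd (x - y)" using assms prime_int by (simp add: prime_dvd_mult_iff)
    then show "x = y" using R_diff_dvd xy by blast
  qed
  moreover have "(\<lambda>w. (u * w) mod int p) ` R = R"
    by (rule endo_inj_surj) (use inj mod_in_R in auto)
  ultimately show ?thesis by (simp add: bij_betw_def)
qed

lemma sum_scale: "\<not> int p dvd u \<Longrightarrow> (\<Sum>w\<in>R. g ((u * w) mod int p)) = (\<Sum>w\<in>R. g w)"
  using sum.reindex_bij_betw[OF scale_bij, of u g] by simp

end

context P4
begin

lemma sum_ind': "finite A \<Longrightarrow> (\<Sum>u\<in>A. if P u then c else 0) = c * int (card {u\<in>A. P u})"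
  by (rule sum_ind)

lemma rho_nd: "\<not> int p dvd t \<Longrightarrow> rho t = (if Q t then 2 else 0)"
  unfolding rho_def by (simp add: dvd_eq_mod_eq_0)

lemma Q_1: "Q 1"
proof -
  have "\<not> [1 = 0] (mod int p)" using p_gt by (simp add: cong_def)
  moreover have "QuadRes (int p) 1" unfolding QuadRes_def by (rule exI[of _ 1]) simp
  ultimately show ?thesis by (simp add: Q_def Legendre_def)
qed

lemma one_R: "1 \<in> R" using p_gt by (simp add: R_def)

lemma sum_chi_shift: "(\<Sum>w\<in>R. Legendre (a - w) (int p)) = 0"
proof -
  have "(\<Sum>w\<in>R. Legendre (a - w) (int p)) = (\<Sum>w\<in>R. Legendre ((a - w) mod int p) (int p))"
    by (simp add: Legendre_mod)
  also have "\<dots> = (\<Sum>w\<in>R. Legendre w (int p))"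
    by (rule sum_shift)
  finally show ?thesis using sum_Legendre by simp
qed

lemma Legendre_sq: "\<not> int p dvd w \<Longrightarrow> Legendre w (int p) ^ 2 = 1"
proof -
  assume "\<not> int p dvd w"
  then have "\<not> [w = 0] (mod int p)" by (simp add: cong_0_iff)
  then have "Legendre w (int p) = 1 \<or> Legendre w (int p) = -1" by (auto simp: Legendre_def)
  then show ?thesis by auto
qed

lemma fermat_int: "\<not> int p dvd w \<Longrightarrow> [w * w ^ (4*k-1) = 1] (mod int p)"
proof -
  assume nd: "\<not> int p dvd w"
  have "w * w ^ (4*k-1) = (w ^ (2*k))^2"
    using k_pos by (simp add: power_mult[symmetric] power_Suc[symmetric])
  moreover have "[(w ^ (2*k))^2 = (Legendre w (int p))^2] (mod int p)"
    using euler[of w] by (simp add: cong_pow cong_sym)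
  ultimately show ?thesis using Legendre_sq[OF nd] by simp
qed

lemma m1_cong: "[int p - 1 = -1] (mod int p)" by (simp add: cong_iff_dvd_diff)

lemma m1: "(-1::int) mod int p = int p - 1"
proof -
  have A: "(int p - 1) mod int p = (-1) mod int p" using m1_cong by (simp add: cong_def)
  have B: "(int p - 1) mod int p = int p - 1" by (rule mod_pos_pos_trivial) (use p_gt in auto)
  show ?thesis using trans[OF sym[OF A] B] .
qed

definition iv :: "int \<Rightarrow> int" where "iv w = (w ^ (4*k-1)) mod int p"

lemma iv: "\<not> int p dvd w \<Longrightarrow> [w * iv w = 1] (mod int p)"
  unfolding iv_def using fermat_int[of w] by (simp add: cong_def mod_mult_right_eq)

lemma iv_R: "iv w \<in> R" by (simp add: iv_def mod_in_R)

lemma jac: "(\<Sum>w\<in>R. Legendre w (int p) * Legendre (1 - w) (int p)) = -1"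
proof -
  define f where "f w = (iv w - 1) mod int p" for w
  have RR: "R = insert 0 (R - {0})" using zero_R by auto
  have "(\<Sum>w\<in>R. Legendre w (int p) * Legendre (1 - w) (int p))
      = (\<Sum>w\<in>R-{0}. Legendre w (int p) * Legendre (1 - w) (int p))"
    using sum.remove[OF finR zero_R, of "\<lambda>w. Legendre w (int p) * Legendre (1 - w) (int p)"]
    by (simp add: Legendre_def)
  also have "\<dots> = (\<Sum>w\<in>R-{0}. Legendre (f w) (int p))"
  proof (rule sum.cong[OF refl])
    fix w assume w: "w \<in> R - {0}"
    then have nd: "\<not> int p dvd w" using R_diff_dvd[of w 0] zero_R by auto
    have "Legendre w (int p) * Legendre (1 - w) (int p) = Legendre (w * (1 - w)) (int p)"
      by (simp add: Legendre_mult)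
    also have "[w * (1 - w) = (w * w) * (iv w - 1)] (mod int p)"
    proof -
      have "[w * (w * iv w) = w * 1] (mod int p)" using cong_scalar_left[OF iv[OF nd], of w] by simp
      then have "[w * (w * iv w) - w * w = w * 1 - w * w] (mod int p)" by (simp add: cong_diff)
      then show ?thesis by (simp add: algebra_simps cong_sym)
    qed
    then have "Legendre (w * (1 - w)) (int p) = Legendre ((w * w) * (iv w - 1)) (int p)"
      by (rule Legendre_cong)
    also have "\<dots> = Legendre (iv w - 1) (int p)"
      using Legendre_sq[OF nd] by (simp add: Legendre_mult power2_eq_square)
    also have "\<dots> = Legendre (f w) (int p)" by (simp add: f_def Legendre_mod)
    finally show "Legendre w (int p) * Legendre (1 - w) (int p) = Legendre (f w) (int p)" .
  qed
  also have "\<dots> = (\<Sum>w\<in>R-{int p - 1}. Legendre w (int p))"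
  proof (rule sum.reindex_bij_betw)
    have inj: "inj_on f (R - {0})"
    proof
      fix x y assume x: "x \<in> R - {0}" and y: "y \<in> R - {0}" and fxy: "f x = f y"
      then have ndx: "\<not> int p dvd x" and ndy: "\<not> int p dvd y"
        using R_diff_dvd[of x 0] R_diff_dvd[of y 0] zero_R by auto
      have "[iv x - 1 = iv y - 1] (mod int p)" using fxy by (simp add: f_def cong_def)
      then have e: "[iv x = iv y] (mod int p)" using cong_add[OF _ cong_refl[of 1]] by fastforce
      have "[x = x * (y * iv y)] (mod int p)" using cong_sym[OF cong_scalar_left[OF iv[OF ndy], of x]] by simp
      also have "[x * (y * iv y) = y * (x * iv x)] (mod int p)"
        using cong_sym[OF cong_scalar_left[OF e, of "x*y"]] by (simp add: ac_simps)
      also have "[y * (x * iv x) = y] (mod int p)"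
        using cong_scalar_left[OF iv[OF ndx], of y] by simp
      finally have "[x = y] (mod int p)" .
      then show "x = y" using R_cong x y by auto
    qed
    have sub: "f ` (R - {0}) \<subseteq> R - {int p - 1}"
    proof
      fix z assume "z \<in> f ` (R - {0})"
      then obtain w where w: "w \<in> R - {0}" "z = f w" by auto
      then have nd: "\<not> int p dvd w" using R_diff_dvd[of w 0] zero_R by auto
      have "z \<noteq> int p - 1"
      proof
        assume "z = int p - 1"
        then have "[iv w - 1 = -1] (mod int p)" using w by (simp add: f_def cong_def m1)
        then have "[iv w - 1 + 1 = -1 + 1] (mod int p)" using cong_add cong_refl by blast
        then have "[iv w = 0] (mod int p)" by simp
        then have "[w * iv w = w * 0] (mod int p)" by (rule cong_scalar_left)
        then have "[1 = 0] (mod int p)" using cong_trans[OF cong_sym[OF iv[OF nd]]] by simp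
        then show False using p_gt by (simp add: cong_def)
      qed
      then show "z \<in> R - {int p - 1}" using w by (simp add: f_def mod_in_R)
    qed
    have "card (f ` (R - {0})) = card (R - {int p - 1})"
    proof -
      have "int p - 1 \<in> R" using p_gt by (simp add: R_def)
      then show ?thesis using card_image[OF inj] zero_R by (simp add: cardR)
    qed
    then have "f ` (R - {0}) = R - {int p - 1}"
      using sub by (intro card_subset_eq) auto
    then show "bij_betw f (R - {0}) (R - {int p - 1})" using inj by (simp add: bij_betw_def)
  qed
  also have "\<dots> = (\<Sum>w\<in>R. Legendre w (int p)) - Legendre (int p - 1) (int p)"
  proof -
    have "int p - 1 \<in> R" using p_gt by (simp add: R_def)
    then show ?thesis by (simp add: sum_diff1)
  qed
  also have "Legendre (int p - 1) (int p) = 1"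
    using Legendre_m1 Legendre_cong[OF m1_cong] by simp
  finally show ?thesis using sum_Legendre by simp
qed

lemma R_nd: "x \<in> R \<Longrightarrow> y \<in> R \<Longrightarrow> x \<noteq> y \<Longrightarrow> \<not> int p dvd (x - y)"
  using R_diff_dvd by blast

lemma R_nd0: "x \<in> R \<Longrightarrow> x \<noteq> 0 \<Longrightarrow> \<not> int p dvd x"
  using R_diff_dvd[of x 0] zero_R by auto

lemma rho_1: "rho 1 = 2" using rho_Q[OF Q_1] .

lemma not_Q0: "\<not> Q 0" using Q_R_nz by blast

lemma c1: "int (card {w\<in>R. Q w \<and> Q (1 - w)}) = int k - 1"
proof -
  have S: "(\<Sum>w\<in>R. rho w * rho (1 - w)) = int p - 1"
  proof -
    have "(\<Sum>w\<in>R. rho w * rho (1 - w)) = (\<Sum>w\<in>R. 1 + Legendre w (int p) + Legendre (1 - w) (int p)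
            + Legendre w (int p) * Legendre (1 - w) (int p))"
      by (rule sum.cong[OF refl]) (simp add: rho_Legendre ring_distribs)
    also have "\<dots> = (\<Sum>w\<in>R. 1) + (\<Sum>w\<in>R. Legendre w (int p)) + (\<Sum>w\<in>R. Legendre (1 - w) (int p))
            + (\<Sum>w\<in>R. Legendre w (int p) * Legendre (1 - w) (int p))"
      by (simp only: sum.distrib)
    also have "\<dots> = int p + 0 + 0 + (-1)"
      using sum_Legendre sum_chi_shift[of 1] jac cardR by simp
    finally show ?thesis by simp
  qed
  let ?f = "\<lambda>w. rho w * rho (1 - w)"
  have 1: "1 \<in> R - {0}" using one_R by simp
  have "(\<Sum>w\<in>R. ?f w) = ?f 0 + (\<Sum>w\<in>R-{0}. ?f w)"
    by (rule sum.remove[OF finR zero_R])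
  also have "(\<Sum>w\<in>R-{0}. ?f w) = ?f 1 + (\<Sum>w\<in>R-{0}-{1}. ?f w)"
    by (rule sum.remove[OF _ 1]) simp
  also have "(\<Sum>w\<in>R-{0}-{1}. ?f w) = (\<Sum>w\<in>R-{0}-{1}. if Q w \<and> Q (1 - w) then 4 else 0)"
  proof (rule sum.cong[OF refl])
    fix w assume w: "w \<in> R - {0} - {1}"
    then have "\<not> int p dvd w" "\<not> int p dvd (1 - w)"
      using R_nd0[of w] R_nd[of 1 w] one_R by auto
    then show "?f w = (if Q w \<and> Q (1 - w) then 4 else 0)" by (simp add: rho_nd)
  qed
  also have "\<dots> = 4 * int (card {w\<in>R-{0}-{1}. Q w \<and> Q (1 - w)})"
    by (rule sum_ind) simp
  also have "{w\<in>R-{0}-{1}. Q w \<and> Q (1 - w)} = {w\<in>R. Q w \<and> Q (1 - w)}"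
    using not_Q0 by auto
  finally have "int p - 1 = 2 + (2 + 4 * int (card {w\<in>R. Q w \<and> Q (1 - w)}))"
    using S rho_0 rho_1 by simp
  then show ?thesis using pk by simp
qed

lemma cu: assumes "Q u" shows "int (card {w\<in>R. Q w \<and> Q (u - w)}) = int k - 1"
proof -
  have nd: "\<not> int p dvd u" using Q_nz[OF assms] .
  let ?g = "\<lambda>w. if Q w \<and> Q (u - w) then 1 else (0::int)"
  have "int (card {w\<in>R. Q w \<and> Q (u - w)}) = (\<Sum>w\<in>R. ?g w)"
    using sum_ind[of R "\<lambda>w. Q w \<and> Q (u - w)" 1] by simp
  also have "\<dots> = (\<Sum>w\<in>R. ?g ((u * w) mod int p))"
    by (rule sum_scale[OF nd, symmetric])
  also have "\<dots> = (\<Sum>w\<in>R. if Q w \<and> Q (1 - w) then 1 else 0)"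
  proof (rule sum.cong[OF refl])
    fix w
    have "Q ((u * w) mod int p) = Q w" using Q_mod Q_mult[OF assms] by simp
    moreover have "Q (u - (u * w) mod int p) = Q (1 - w)"
    proof -
      have "[u - (u * w) mod int p = u - u * w] (mod int p)"
        by (rule cong_diff[OF cong_refl]) simp
      moreover have "u - u * w = u * (1 - w)" by (simp add: algebra_simps)
      ultimately have "[u - (u * w) mod int p = u * (1 - w)] (mod int p)" by simp
      then have "Q (u - (u * w) mod int p) = Q (u * (1 - w))" by (rule Q_cong)
      then show ?thesis using Q_mult[OF assms] by simp
    qed
    ultimately show "?g ((u * w) mod int p) = (if Q w \<and> Q (1 - w) then 1 else 0)" by simp
  qed
  also have "\<dots> = int (card {w\<in>R. Q w \<and> Q (1 - w)})"
    using sum_ind[of R "\<lambda>w. Q w \<and> Q (1 - w)" 1] by simp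
  finally show ?thesis using c1 by simp
qed

end

context P4
begin

lemma two:
  fixes f g :: "int \<Rightarrow> int"
  assumes v: "Q v" "v \<in> R" and f0: "f 0 = 0" and g0: "g 0 = 0"
  shows "(\<Sum>w\<in>R. f (rho w) * g (rho (v - w))) = f 1 * g 2 + f 2 * g 1 + f 2 * g 2 * (int k - 1)"
proof -
  let ?F = "\<lambda>w. f (rho w) * g (rho (v - w))"
  have v0: "v \<noteq> 0" using Q_R_nz[OF v(1)] .
  have vR: "v \<in> R - {0}" using v v0 by simp
  have "(\<Sum>w\<in>R. ?F w) = ?F 0 + (\<Sum>w\<in>R-{0}. ?F w)"
    by (rule sum.remove[OF finR zero_R])
  also have "(\<Sum>w\<in>R-{0}. ?F w) = ?F v + (\<Sum>w\<in>R-{0}-{v}. ?F w)"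
    by (rule sum.remove[OF _ vR]) simp
  also have "(\<Sum>w\<in>R-{0}-{v}. ?F w) = (\<Sum>w\<in>R-{0}-{v}. if Q w \<and> Q (v - w) then f 2 * g 2 else 0)"
  proof (rule sum.cong[OF refl])
    fix w assume w: "w \<in> R - {0} - {v}"
    then have "\<not> int p dvd w" "\<not> int p dvd (v - w)"
      using R_nd0[of w] R_nd[of v w] v by auto
    then show "?F w = (if Q w \<and> Q (v - w) then f 2 * g 2 else 0)"
      by (simp add: rho_nd f0 g0)
  qed
  also have "\<dots> = f 2 * g 2 * int (card {w\<in>R-{0}-{v}. Q w \<and> Q (v - w)})"
    by (rule sum_ind) simp
  also have "{w\<in>R-{0}-{v}. Q w \<and> Q (v - w)} = {w\<in>R. Q w \<and> Q (v - w)}"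
    using not_Q0 by auto
  also have "int (card {w\<in>R. Q w \<and> Q (v - w)}) = int k - 1" by (rule cu[OF v(1)])
  finally show ?thesis using rho_0 rho_Q[OF v(1)] by simp
qed

definition Cs :: "int \<Rightarrow> int \<Rightarrow> int" where
  "Cs u v = int (card {w\<in>R. Q w \<and> Q (u - w) \<and> Q (v - w)})"

lemma three:
  fixes f g h :: "int \<Rightarrow> int"
  assumes u: "Q u" "u \<in> R" and v: "Q v" "v \<in> R" and uv: "Q (u - v)"
    and f0: "f 0 = 0" and g0: "g 0 = 0" and h0: "h 0 = 0"
  shows "(\<Sum>w\<in>R. f (rho w) * g (rho (u - w)) * h (rho (v - w)))
       = f 1 * g 2 * h 2 + f 2 * g 1 * h 2 + f 2 * g 2 * h 1 + f 2 * g 2 * h 2 * Cs u v"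
proof -
  let ?F = "\<lambda>w. f (rho w) * g (rho (u - w)) * h (rho (v - w))"
  have u0: "u \<noteq> 0" using Q_R_nz[OF u(1)] .
  have v0: "v \<noteq> 0" using Q_R_nz[OF v(1)] .
  have uv0: "u \<noteq> v" using Q_R_nz[OF uv] by simp
  have vu: "Q (v - u)" using uv Q_swap by simp
  have uR: "u \<in> R - {0}" using u u0 by simp
  have vR: "v \<in> R - {0} - {u}" using v v0 uv0 by simp
  have "(\<Sum>w\<in>R. ?F w) = ?F 0 + (\<Sum>w\<in>R-{0}. ?F w)"
    by (rule sum.remove[OF finR zero_R])
  also have "(\<Sum>w\<in>R-{0}. ?F w) = ?F u + (\<Sum>w\<in>R-{0}-{u}. ?F w)"
    by (rule sum.remove[OF _ uR]) simp
  also have "(\<Sum>w\<in>R-{0}-{u}. ?F w) = ?F v + (\<Sum>w\<in>R-{0}-{u}-{v}. ?F w)"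
    by (rule sum.remove[OF _ vR]) simp
  also have "(\<Sum>w\<in>R-{0}-{u}-{v}. ?F w)
      = (\<Sum>w\<in>R-{0}-{u}-{v}. if Q w \<and> Q (u - w) \<and> Q (v - w) then f 2 * g 2 * h 2 else 0)"
  proof (rule sum.cong[OF refl])
    fix w assume w: "w \<in> R - {0} - {u} - {v}"
    then have "\<not> int p dvd w" "\<not> int p dvd (u - w)" "\<not> int p dvd (v - w)"
      using R_nd0[of w] R_nd[of u w] R_nd[of v w] u v by auto
    then show "?F w = (if Q w \<and> Q (u - w) \<and> Q (v - w) then f 2 * g 2 * h 2 else 0)"
      by (simp add: rho_nd f0 g0 h0)
  qed
  also have "\<dots> = f 2 * g 2 * h 2 * int (card {w\<in>R-{0}-{u}-{v}. Q w \<and> Q (u - w) \<and> Q (v - w)})"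
    by (rule sum_ind) simp
  also have "{w\<in>R-{0}-{u}-{v}. Q w \<and> Q (u - w) \<and> Q (v - w)} = {w\<in>R. Q w \<and> Q (u - w) \<and> Q (v - w)}"
    using not_Q0 by auto
  finally show ?thesis
    using rho_0 rho_Q[OF u(1)] rho_Q[OF v(1)] rho_Q[OF uv] rho_Q[OF vu]
    by (simp add: Cs_def)
qed

definition G :: "int \<Rightarrow> int \<Rightarrow> int" where
  "G u v = (\<Sum>w\<in>R. rho w * rho (u - w) * rho (v - w))"

lemma G00: "G 0 0 = 1 + 16 * int k"
proof -
  let ?F = "\<lambda>w. rho w * rho (0 - w) * rho (0 - w)"
  have "G 0 0 = ?F 0 + (\<Sum>w\<in>R-{0}. ?F w)"
    unfolding G_def by (rule sum.remove[OF finR zero_R])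
  also have "(\<Sum>w\<in>R-{0}. ?F w) = (\<Sum>w\<in>R-{0}. if Q w then 8 else 0)"
  proof (rule sum.cong[OF refl])
    fix w assume w: "w \<in> R - {0}"
    then have "\<not> int p dvd w" using R_nd0[of w] by auto
    then show "?F w = (if Q w then 8 else 0)" using rho_neg[of w] by (simp add: rho_nd)
  qed
  also have "\<dots> = 8 * int (card {w\<in>R-{0}. Q w})" by (rule sum_ind) simp
  also have "{w\<in>R-{0}. Q w} = {w\<in>R. Q w}" using not_Q0 by auto
  finally show ?thesis using rho_0 count_Q by simp
qed

lemma G0v: assumes "Q v" "v \<in> R" shows "G 0 v = 8 * int k - 2"
proof -
  have "G 0 v = (\<Sum>w\<in>R. (\<lambda>x. x * x) (rho w) * (\<lambda>x. x) (rho (v - w)))"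
    unfolding G_def by (rule sum.cong[OF refl]) (simp add: rho_neg)
  also have "\<dots> = 8 * int k - 2" by (subst two[OF assms]) (simp_all add: algebra_simps)
  finally show ?thesis .
qed

lemma Gu0: assumes "Q u" "u \<in> R" shows "G u 0 = 8 * int k - 2"
proof -
  have "G u 0 = (\<Sum>w\<in>R. (\<lambda>x. x * x) (rho w) * (\<lambda>x. x) (rho (u - w)))"
    unfolding G_def by (rule sum.cong[OF refl]) (simp add: rho_neg)
  also have "\<dots> = 8 * int k - 2" by (subst two[OF assms]) (simp_all add: algebra_simps)
  finally show ?thesis .
qed

lemma Guu: assumes "Q u" "u \<in> R" shows "G u u = 8 * int k - 2"
proof -
  have "G u u = (\<Sum>w\<in>R. (\<lambda>x. x) (rho w) * (\<lambda>x. x * x) (rho (u - w)))"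
    unfolding G_def by (rule sum.cong[OF refl]) simp
  also have "\<dots> = 8 * int k - 2" by (subst two[OF assms]) (simp_all add: algebra_simps)
  finally show ?thesis .
qed

lemma Guv: assumes "Q u" "u \<in> R" "Q v" "v \<in> R" "Q (u - v)"
  shows "G u v = 12 + 8 * Cs u v"
proof -
  have "G u v = (\<Sum>w\<in>R. (\<lambda>x. x) (rho w) * (\<lambda>x. x) (rho (u - w)) * (\<lambda>x. x) (rho (v - w)))"
    unfolding G_def by simp
  also have "\<dots> = 12 + 8 * Cs u v" by (subst three[OF assms]) simp_all
  finally show ?thesis .
qed

definition H :: "int \<Rightarrow> int \<Rightarrow> int" where
  "H u v = rho u * rho v * rho (u - v) * G u v"

definition X :: "int \<Rightarrow> int" where
  "X u = (\<Sum>v\<in>R. if Q v \<and> Q (u - v) then Cs u v else 0)"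

lemma inner0: "(\<Sum>v\<in>R. H 0 v) = 1 + 16 * int k + 8 * int k * (8 * int k - 2)"
proof -
  have "(\<Sum>v\<in>R. H 0 v) = H 0 0 + (\<Sum>v\<in>R-{0}. H 0 v)"
    by (rule sum.remove[OF finR zero_R])
  also have "(\<Sum>v\<in>R-{0}. H 0 v) = (\<Sum>v\<in>R-{0}. if Q v then 4 * (8 * int k - 2) else 0)"
  proof (rule sum.cong[OF refl])
    fix v assume v: "v \<in> R - {0}"
    then have nd: "\<not> int p dvd v" using R_nd0[of v] by auto
    show "H 0 v = (if Q v then 4 * (8 * int k - 2) else 0)"
    proof (cases "Q v")
      case True
      then show ?thesis using G0v[OF True] v rho_neg[of v] rho_Q[OF True] rho_0
        by (simp add: H_def)
    next
      case False
      then show ?thesis using rho_nd[OF nd] by (simp add: H_def)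
    qed
  qed
  also have "\<dots> = 4 * (8 * int k - 2) * int (card {v\<in>R-{0}. Q v})" by (rule sum_ind) simp
  also have "{v\<in>R-{0}. Q v} = {v\<in>R. Q v}" using not_Q0 by auto
  finally show ?thesis using count_Q rho_0 G00 by (simp add: H_def algebra_simps)
qed

lemma innerQ: assumes u: "Q u" "u \<in> R"
  shows "(\<Sum>v\<in>R. H u v) = 8 * (8 * int k - 2) + 96 * (int k - 1) + 64 * X u"
proof -
  have u0: "u \<noteq> 0" using Q_R_nz[OF u(1)] .
  have uR: "u \<in> R - {0}" using u u0 by simp
  let ?P = "\<lambda>v. Q v \<and> Q (u - v)"
  have "(\<Sum>v\<in>R. H u v) = H u 0 + (\<Sum>v\<in>R-{0}. H u v)"
    by (rule sum.remove[OF finR zero_R])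
  also have "(\<Sum>v\<in>R-{0}. H u v) = H u u + (\<Sum>v\<in>R-{0}-{u}. H u v)"
    by (rule sum.remove[OF _ uR]) simp
  also have "(\<Sum>v\<in>R-{0}-{u}. H u v) = (\<Sum>v\<in>R-{0}-{u}. (if ?P v then 96 else 0) + 64 * (if ?P v then Cs u v else 0))"
  proof (rule sum.cong[OF refl])
    fix v assume v: "v \<in> R - {0} - {u}"
    then have nd: "\<not> int p dvd v" "\<not> int p dvd (u - v)"
      using R_nd0[of v] R_nd[of u v] u by auto
    show "H u v = (if ?P v then 96 else 0) + 64 * (if ?P v then Cs u v else 0)"
    proof (cases "?P v")
      case True
      then show ?thesis using Guv[OF u _ _ _, of v] v rho_Q[OF u(1)] rho_Q[of v] rho_Q[of "u - v"]
        by (simp add: H_def algebra_simps)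
    next
      case False
      then show ?thesis using rho_nd[OF nd(1)] rho_nd[OF nd(2)] by (auto simp: H_def)
    qed
  qed
  also have "\<dots> = (\<Sum>v\<in>R-{0}-{u}. if ?P v then 96 else 0) + 64 * (\<Sum>v\<in>R-{0}-{u}. if ?P v then Cs u v else 0)"
    by (simp add: sum.distrib sum_distrib_left)
  also have "(\<Sum>v\<in>R-{0}-{u}. if ?P v then 96 else 0) = 96 * int (card {v\<in>R-{0}-{u}. ?P v})"
    by (rule sum_ind) simp
  also have "{v\<in>R-{0}-{u}. ?P v} = {v\<in>R. ?P v}" using not_Q0 by auto
  also have "int (card {v\<in>R. ?P v}) = int k - 1" by (rule cu[OF u(1)])
  also have "(\<Sum>v\<in>R-{0}-{u}. if ?P v then Cs u v else 0) = X u"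
    unfolding X_def by (rule sum.mono_neutral_left) (use not_Q0 in auto)
  finally show ?thesis
    using Gu0[OF u] Guu[OF u] rho_Q[OF u(1)] rho_0 by (simp add: H_def algebra_simps)
qed

lemma innernQ: assumes "u \<in> R" "u \<noteq> 0" "\<not> Q u" shows "(\<Sum>v\<in>R. H u v) = 0"
proof -
  have "rho u = 0" using rho_nd[OF R_nd0[OF assms(1,2)]] assms(3) by simp
  then show ?thesis by (simp add: H_def)
qed

lemma total_H: "(\<Sum>u\<in>R. \<Sum>v\<in>R. H u v) = 1 + 16 * int k + 8 * int k * (8 * int k - 2)
   + 2 * int k * (8 * (8 * int k - 2) + 96 * (int k - 1)) + 64 * (\<Sum>u\<in>R. if Q u then X u else 0)"
proof -
  let ?A = "8 * (8 * int k - 2) + 96 * (int k - 1)"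
  have "(\<Sum>u\<in>R. \<Sum>v\<in>R. H u v) = (\<Sum>v\<in>R. H 0 v) + (\<Sum>u\<in>R-{0}. \<Sum>v\<in>R. H u v)"
    by (rule sum.remove[OF finR zero_R])
  also have "(\<Sum>u\<in>R-{0}. \<Sum>v\<in>R. H u v) = (\<Sum>u\<in>R-{0}. (if Q u then ?A else 0) + 64 * (if Q u then X u else 0))"
  proof (rule sum.cong[OF refl])
    fix u assume u: "u \<in> R - {0}"
    show "(\<Sum>v\<in>R. H u v) = (if Q u then ?A else 0) + 64 * (if Q u then X u else 0)"
      using innerQ[of u] innernQ[of u] u by auto
  qed
  also have "\<dots> = (\<Sum>u\<in>R-{0}. if Q u then ?A else 0) + 64 * (\<Sum>u\<in>R-{0}. if Q u then X u else 0)"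
    by (simp add: sum.distrib sum_distrib_left)
  also have "(\<Sum>u\<in>R-{0}. if Q u then ?A else 0) = ?A * int (card {u\<in>R-{0}. Q u})"
    by (rule sum_ind) simp
  also have "{u\<in>R-{0}. Q u} = {u\<in>R. Q u}" using not_Q0 by auto
  also have "(\<Sum>u\<in>R-{0}. if Q u then X u else 0) = (\<Sum>u\<in>R. if Q u then X u else 0)"
    by (rule sum.mono_neutral_left) (use not_Q0 in auto)
  finally show ?thesis using inner0 count_Q by (simp add: algebra_simps)
qed

definition M3 :: int where
  "M3 = (\<Sum>u\<in>R. \<Sum>v\<in>R. \<Sum>w\<in>R.
      if Q u \<and> Q v \<and> Q w \<and> Q (u - v) \<and> Q (u - w) \<and> Q (v - w) then 1 else 0)"

lemma M3_X: "M3 = (\<Sum>u\<in>R. if Q u then X u else 0)"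
  unfolding M3_def
proof (rule sum.cong[OF refl])
  fix u assume "u \<in> R"
  have "(\<Sum>v\<in>R. \<Sum>w\<in>R. if Q u \<and> Q v \<and> Q w \<and> Q (u - v) \<and> Q (u - w) \<and> Q (v - w) then 1 else 0)
      = (\<Sum>v\<in>R. if Q u then (if Q v \<and> Q (u - v) then Cs u v else 0) else 0)"
  proof (rule sum.cong[OF refl])
    fix v
    show "(\<Sum>w\<in>R. if Q u \<and> Q v \<and> Q w \<and> Q (u - v) \<and> Q (u - w) \<and> Q (v - w) then 1 else 0)
        = (if Q u then (if Q v \<and> Q (u - v) then Cs u v else 0) else 0)"
    proof (cases "Q u \<and> Q v \<and> Q (u - v)")
      case True
      then have "(\<Sum>w\<in>R. if Q u \<and> Q v \<and> Q w \<and> Q (u - v) \<and> Q (u - w) \<and> Q (v - w) then 1 else 0)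
          = (\<Sum>w\<in>R. if Q w \<and> Q (u - w) \<and> Q (v - w) then 1 else 0)" by simp
      also have "\<dots> = Cs u v" unfolding Cs_def using sum_ind[of R _ 1] by simp
      finally show ?thesis using True by simp
    next
      case False
      then show ?thesis by auto
    qed
  qed
  then show "(\<Sum>v\<in>R. \<Sum>w\<in>R. if Q u \<and> Q v \<and> Q w \<and> Q (u - v) \<and> Q (u - w) \<and> Q (v - w) then 1 else 0)
      = (if Q u then X u else 0)" by (simp add: X_def)
qed

definition Tot :: int where
  "Tot = (\<Sum>u\<in>R. \<Sum>v\<in>R. \<Sum>w\<in>R. rho u * rho v * rho w * rho (v - w) * rho (u - v) * rho (u - w))"

lemma Tot_eq: "Tot = 64 * M3 + 384 * int k ^ 2 - 224 * int k + 1"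
proof -
  have "Tot = (\<Sum>u\<in>R. \<Sum>v\<in>R. H u v)"
    unfolding Tot_def
  proof (intro sum.cong refl)
    fix u v
    have "(\<Sum>w\<in>R. rho u * rho v * rho w * rho (v - w) * rho (u - v) * rho (u - w))
        = (\<Sum>w\<in>R. (rho u * rho v * rho (u - v)) * (rho w * rho (u - w) * rho (v - w)))"
      by (rule sum.cong[OF refl]) (simp add: ac_simps)
    also have "\<dots> = H u v" by (simp add: H_def G_def sum_distrib_left)
    finally show "(\<Sum>w\<in>R. rho u * rho v * rho w * rho (v - w) * rho (u - v) * rho (u - w)) = H u v" .
  qed
  then show ?thesis using total_H M3_X by (simp add: algebra_simps power2_eq_square)
qed

end

context P4
begin

lemma six: "(i::nat) \<in> {0..5} \<longleftrightarrow> i = 0 \<or> i = 1 \<or> i = 2 \<or> i = 3 \<or> i = 4 \<or> i = 5"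
  by auto

lemma rho_mod_l: "rho (x mod int p - y) = rho (x - y)"
  by (rule rho_cong) (simp add: cong_diff)

lemma rho_mod_r: "rho (y - x mod int p) = rho (y - x)"
  by (rule rho_cong) (simp add: cong_diff)

definition Sol :: "(nat \<Rightarrow> int) set" where
  "Sol = {x \<in> PiE {0..5} (\<lambda>_. {0..<int p}).
     [x 1 ^ 2 - x 2 ^ 2 = x 3 ^ 2] (mod int p) \<and>
     [x 0 ^ 2 - x 1 ^ 2 = x 4 ^ 2] (mod int p) \<and>
     [x 0 ^ 2 - x 2 ^ 2 = x 5 ^ 2] (mod int p)}"

definition Y :: "int \<Rightarrow> int set" where "Y t = {y\<in>R. [t = y^2] (mod int p)}"

lemma card_Y: "card (Y t) = rho t"
  using sqcount[of t] unfolding Y_def by (simp add: cong_sym_eq)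

lemma finite_Y: "finite (Y t)" by (simp add: Y_def)

definition Sig :: "((int \<times> int \<times> int) \<times> (int \<times> int \<times> int)) set" where
  "Sig = (SIGMA t : R \<times> R \<times> R. (case t of (a, b, c) \<Rightarrow> Y (b^2 - c^2) \<times> Y (a^2 - b^2) \<times> Y (a^2 - c^2)))"

definition phi :: "(nat \<Rightarrow> int) \<Rightarrow> (int \<times> int \<times> int) \<times> (int \<times> int \<times> int)" where
  "phi x = ((x 0, x 1, x 2), (x 3, x 4, x 5))"

definition psi :: "(int \<times> int \<times> int) \<times> (int \<times> int \<times> int) \<Rightarrow> (nat \<Rightarrow> int)" where
  "psi t = (case t of ((a, b, c), (y3, y4, y5)) \<Rightarrow>
     (\<lambda>i\<in>{0..5}. if i = 0 then a else if i = 1 then b else if i = 2 then c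
        else if i = 3 then y3 else if i = 4 then y4 else y5))"

lemma bij_phi: "bij_betw phi Sol Sig"
proof -
  have inj: "inj_on phi Sol"
  proof
    fix x y assume x: "x \<in> Sol" and y: "y \<in> Sol" and e: "phi x = phi y"
    show "x = y"
    proof (rule PiE_ext)
      show "x \<in> PiE {0..5} (\<lambda>_. {0..<int p})" using x by (simp add: Sol_def)
      show "y \<in> PiE {0..5} (\<lambda>_. {0..<int p})" using y by (simp add: Sol_def)
      fix i :: nat assume "i \<in> {0..5}"
      then show "x i = y i" using e unfolding six phi_def by auto
    qed
  qed
  have sub1: "phi ` Sol \<subseteq> Sig"
  proof
    fix t assume "t \<in> phi ` Sol"
    then obtain x where x: "x \<in> Sol" "t = phi x" by auto
    have "\<And>i. i \<in> {0..5} \<Longrightarrow> x i \<in> R"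
      using x(1) unfolding Sol_def R_def by (auto simp: PiE_iff)
    then have "x 0 \<in> R" "x 1 \<in> R" "x 2 \<in> R" "x 3 \<in> R" "x 4 \<in> R" "x 5 \<in> R" by auto
    then show "t \<in> Sig" using x unfolding Sig_def Sol_def phi_def Y_def by auto
  qed
  have sub2: "Sig \<subseteq> phi ` Sol"
  proof
    fix t assume t: "t \<in> Sig"
    obtain a b c y3 y4 y5 where tt: "t = ((a, b, c), (y3, y4, y5))" by (metis prod.exhaust)
    have "psi t \<in> Sol" using t unfolding tt Sig_def Sol_def psi_def Y_def R_def
      by (auto simp: PiE_iff)
    moreover have "phi (psi t) = t" unfolding tt psi_def phi_def by simp
    ultimately show "t \<in> phi ` Sol" by (metis imageI)
  qed
  show ?thesis using inj sub1 sub2 by (auto simp: bij_betw_def)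
qed

lemma card_Sol_sum: "int (card Sol) = (\<Sum>a\<in>R. \<Sum>b\<in>R. \<Sum>c\<in>R. rho (b^2 - c^2) * rho (a^2 - b^2) * rho (a^2 - c^2))"
proof -
  have "card Sol = card Sig" using bij_betw_same_card[OF bij_phi] .
  also have "card Sig = (\<Sum>t\<in>R \<times> R \<times> R. card (case t of (a, b, c) \<Rightarrow> Y (b^2 - c^2) \<times> Y (a^2 - b^2) \<times> Y (a^2 - c^2)))"
    unfolding Sig_def by (rule card_SigmaI) (auto simp: finite_Y)
  finally have "int (card Sol) = (\<Sum>t\<in>R \<times> R \<times> R. int (card (case t of (a, b, c) \<Rightarrow> Y (b^2 - c^2) \<times> Y (a^2 - b^2) \<times> Y (a^2 - c^2))))"
    by simp
  also have "\<dots> = (\<Sum>t\<in>R \<times> R \<times> R. case t of (a, b, c) \<Rightarrow> rho (b^2 - c^2) * rho (a^2 - b^2) * rho (a^2 - c^2))"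
    by (rule sum.cong[OF refl]) (auto simp: card_cartesian_product card_Y)
  also have "\<dots> = (\<Sum>a\<in>R. \<Sum>b\<in>R. \<Sum>c\<in>R. rho (b^2 - c^2) * rho (a^2 - b^2) * rho (a^2 - c^2))"
    by (simp add: sum.cartesian_product)
  finally show ?thesis .
qed

lemma card_Sol: "int (card Sol) = Tot"
proof -
  have "int (card Sol) = (\<Sum>a\<in>R. \<Sum>b\<in>R. \<Sum>c\<in>R. rho (b^2 - c^2) * rho (a^2 - b^2) * rho (a^2 - c^2))"
    by (rule card_Sol_sum)
  also have "\<dots> = (\<Sum>a\<in>R. (\<lambda>s. \<Sum>b\<in>R. \<Sum>c\<in>R. rho (b^2 - c^2) * rho (s - b^2) * rho (s - c^2)) (a^2 mod int p))"
    by (intro sum.cong refl) (simp add: rho_mod_l)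
  also have "\<dots> = (\<Sum>u\<in>R. rho u * (\<Sum>b\<in>R. \<Sum>c\<in>R. rho (b^2 - c^2) * rho (u - b^2) * rho (u - c^2)))"
    by (rule sum_sq_fiber)
  also have "\<dots> = (\<Sum>u\<in>R. rho u * (\<Sum>v\<in>R. rho v * (\<Sum>c\<in>R. rho (v - c^2) * rho (u - v) * rho (u - c^2))))"
  proof (rule sum.cong[OF refl])
    fix u
    have "(\<Sum>b\<in>R. \<Sum>c\<in>R. rho (b^2 - c^2) * rho (u - b^2) * rho (u - c^2))
        = (\<Sum>b\<in>R. (\<lambda>t. \<Sum>c\<in>R. rho (t - c^2) * rho (u - t) * rho (u - c^2)) (b^2 mod int p))"
      by (intro sum.cong refl) (simp add: rho_mod_l rho_mod_r)
    also have "\<dots> = (\<Sum>v\<in>R. rho v * (\<Sum>c\<in>R. rho (v - c^2) * rho (u - v) * rho (u - c^2)))"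
      by (rule sum_sq_fiber)
    finally show "rho u * (\<Sum>b\<in>R. \<Sum>c\<in>R. rho (b^2 - c^2) * rho (u - b^2) * rho (u - c^2))
        = rho u * (\<Sum>v\<in>R. rho v * (\<Sum>c\<in>R. rho (v - c^2) * rho (u - v) * rho (u - c^2)))" by simp
  qed
  also have "\<dots> = (\<Sum>u\<in>R. rho u * (\<Sum>v\<in>R. rho v * (\<Sum>w\<in>R. rho w * (rho (v - w) * rho (u - v) * rho (u - w)))))"
  proof -
    have inner: "(\<Sum>c\<in>R. rho (v - c^2) * rho (u - v) * rho (u - c^2))
        = (\<Sum>w\<in>R. rho w * (rho (v - w) * rho (u - v) * rho (u - w)))" for u v
    proof -
      have "(\<Sum>c\<in>R. rho (v - c^2) * rho (u - v) * rho (u - c^2))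
          = (\<Sum>c\<in>R. (\<lambda>s. rho (v - s) * rho (u - v) * rho (u - s)) (c^2 mod int p))"
        by (intro sum.cong refl) (simp add: rho_mod_l rho_mod_r)
      also have "\<dots> = (\<Sum>w\<in>R. rho w * (rho (v - w) * rho (u - v) * rho (u - w)))"
        by (rule sum_sq_fiber)
      finally show ?thesis .
    qed
    show ?thesis by (simp only: inner)
  qed
  also have "\<dots> = Tot"
    unfolding Tot_def by (simp add: sum_distrib_left ac_simps)
  finally show ?thesis .
qed

end

context P4
begin

definition sc :: "int \<Rightarrow> (nat \<Rightarrow> int) \<Rightarrow> (nat \<Rightarrow> int)" where
  "sc c x = (\<lambda>i\<in>{0..5}. (c * x i) mod int p)"

definition zv :: "nat \<Rightarrow> int" where "zv = (\<lambda>i\<in>{0..5}. 0)"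

lemma S_vecs_eq: "S_vecs p = Sol - {zv}"
proof -
  have "x \<noteq> zv \<longleftrightarrow> (\<exists>i\<in>{0..5}. x i \<noteq> 0)" if "x \<in> PiE {0..5} (\<lambda>_. {0..<int p})" for x
  proof
    assume xz: "x \<noteq> zv"
    show "\<exists>i\<in>{0..5}. x i \<noteq> 0"
    proof (rule ccontr)
      assume "\<not> (\<exists>i\<in>{0..5}. x i \<noteq> 0)"
      then have all0: "\<forall>i\<in>{0..5}. x i = 0" by auto
      have "zv \<in> PiE {0..5} (\<lambda>_. {0..<int p})" using p_gt by (auto simp: zv_def PiE_iff)
      then have "x = zv" using PiE_ext[OF that] all0 by (auto simp: zv_def)
      then show False using xz by simp
    qed
  next
    assume "\<exists>i\<in>{0..5}. x i \<noteq> 0"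
    then show "x \<noteq> zv" by (auto simp: zv_def)
  qed
  then show ?thesis unfolding S_vecs_def Sol_def by blast
qed

lemma zv_Sol: "zv \<in> Sol"
  unfolding Sol_def zv_def using p_gt by (auto simp: PiE_iff)

lemma finite_Sol: "finite Sol"
proof -
  have "Sol \<subseteq> PiE {0..5} (\<lambda>_. {0..<int p})" by (auto simp: Sol_def)
  moreover have "finite (PiE {0..5::nat} (\<lambda>_. {0..<int p}))" by (rule finite_PiE) auto
  ultimately show ?thesis by (rule finite_subset)
qed

lemma card_S_vecs: "int (card (S_vecs p)) = Tot - 1"
proof -
  have "card (S_vecs p) = card Sol - 1" using S_vecs_eq zv_Sol finite_Sol by simp
  moreover have "card Sol > 0" using zv_Sol finite_Sol by (auto simp: card_gt_0_iff)
  ultimately show ?thesis using card_Sol by simp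
qed

lemma sq_cong_scale:
  assumes "[a^2 - b^2 = e^2] (mod int p)"
  shows "[(c * a mod int p)^2 - (c * b mod int p)^2 = (c * e mod int p)^2] (mod int p)"
proof -
  have h: "[(c * z mod int p)^2 = c^2 * z^2] (mod int p)" for z
  proof -
    have "[(c * z mod int p)^2 = (c * z)^2] (mod int p)" by (intro cong_pow) simp
    then show ?thesis by (simp add: power_mult_distrib)
  qed
  have "[(c * a mod int p)^2 - (c * b mod int p)^2 = c^2 * a^2 - c^2 * b^2] (mod int p)"
    by (intro cong_diff h)
  also have "c^2 * a^2 - c^2 * b^2 = c^2 * (a^2 - b^2)" by (simp add: algebra_simps)
  also have "[c^2 * (a^2 - b^2) = c^2 * e^2] (mod int p)" by (rule cong_scalar_left[OF assms])
  also have "[c^2 * e^2 = (c * e mod int p)^2] (mod int p)" by (rule cong_sym[OF h])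
  finally show ?thesis .
qed

lemma sc_S: assumes x: "x \<in> S_vecs p" and c: "\<not> int p dvd c" shows "sc c x \<in> S_vecs p"
proof -
  have xP: "x \<in> PiE {0..5} (\<lambda>_. {0..<int p})" and eq1: "[x 1 ^ 2 - x 2 ^ 2 = x 3 ^ 2] (mod int p)"
    and eq2: "[x 0 ^ 2 - x 1 ^ 2 = x 4 ^ 2] (mod int p)" and eq3: "[x 0 ^ 2 - x 2 ^ 2 = x 5 ^ 2] (mod int p)"
    using x by (auto simp: S_vecs_def)
  obtain i where i: "i \<in> {0..5}" "x i \<noteq> 0" using x by (auto simp: S_vecs_def)
  have xiR: "x i \<in> R" using PiE_mem[OF xP i(1)] by (simp add: R_def)
  have "\<not> int p dvd x i" using R_nd0[OF xiR i(2)] .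
  then have "\<not> int p dvd c * x i" using c prime_int by (simp add: prime_dvd_mult_iff)
  then have nz: "sc c x i \<noteq> 0" using i(1) by (simp add: sc_def dvd_eq_mod_eq_0)
  have P: "sc c x \<in> PiE {0..5} (\<lambda>_. {0..<int p})"
    using p_gt by (auto simp: sc_def PiE_iff)
  have scv: "\<And>j. j \<in> {0..5} \<Longrightarrow> sc c x j = (c * x j) mod int p" by (simp add: sc_def)
  have ex: "\<exists>j\<in>{0..5}. sc c x j \<noteq> 0" using i(1) nz by blast
  have e1: "[sc c x 1 ^ 2 - sc c x 2 ^ 2 = sc c x 3 ^ 2] (mod int p)"
    using sq_cong_scale[OF eq1, of c] scv[of 1] scv[of 2] scv[of 3] by simp
  have e2: "[sc c x 0 ^ 2 - sc c x 1 ^ 2 = sc c x 4 ^ 2] (mod int p)"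
    using sq_cong_scale[OF eq2, of c] scv[of 0] scv[of 1] scv[of 4] by simp
  have e3: "[sc c x 0 ^ 2 - sc c x 2 ^ 2 = sc c x 5 ^ 2] (mod int p)"
    using sq_cong_scale[OF eq3, of c] scv[of 0] scv[of 2] scv[of 5] by simp
  show ?thesis unfolding S_vecs_def using P ex e1 e2 e3 by blast
qed

lemma sc_1: "x \<in> PiE {0..5} (\<lambda>_. {0..<int p}) \<Longrightarrow> sc 1 x = x"
  by (rule PiE_ext[of _ "{0..5}" "\<lambda>_. {0..<int p}"]) (auto simp: sc_def PiE_iff)

lemma sc_comp: "sc c (sc c' x) = sc (c * c') x"
  by (auto simp: sc_def fun_eq_iff mod_mult_right_eq ac_simps)

lemma sc_cong: "[c = c'] (mod int p) \<Longrightarrow> sc c x = sc c' x"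
  by (auto simp: sc_def fun_eq_iff cong_def mod_mult_left_eq[of c, symmetric] mod_mult_left_eq[of c', symmetric])

lemma proj_rel_eq: "proj_rel p = {(x, y). x \<in> S_vecs p \<and> y \<in> S_vecs p \<and> (\<exists>c. \<not> int p dvd c \<and> y = sc c x)}"
  unfolding proj_rel_def sc_def by simp

lemma iv_nd: "\<not> int p dvd c \<Longrightarrow> \<not> int p dvd iv c"
proof
  assume c: "\<not> int p dvd c" and d: "int p dvd iv c"
  then have "int p dvd c * iv c" by simp
  then have "[c * iv c = 0] (mod int p)" by (simp add: cong_0_iff)
  then have "[1 = 0] (mod int p)" using cong_trans[OF cong_sym[OF iv[OF c]]] by blast
  then show False using p_gt by (simp add: cong_def)
qed

lemma equiv_proj: "equiv (S_vecs p) (proj_rel p)"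
proof (rule equivI)
  show "proj_rel p \<subseteq> S_vecs p \<times> S_vecs p" by (auto simp: proj_rel_eq)
  show "refl_on (S_vecs p) (proj_rel p)"
  proof (rule refl_onI)
    fix x assume x: "x \<in> S_vecs p"
    then have "x = sc 1 x" using sc_1 by (simp add: S_vecs_def)
    moreover have "\<not> int p dvd 1" using p_gt by simp
    ultimately have "\<exists>c. \<not> int p dvd c \<and> x = sc c x" by blast
    then show "(x, x) \<in> proj_rel p" using x by (simp add: proj_rel_eq)
  qed
  show "sym (proj_rel p)"
  proof (rule symI)
    fix x y assume "(x, y) \<in> proj_rel p"
    then obtain c where xy: "x \<in> S_vecs p" "y \<in> S_vecs p" "\<not> int p dvd c" "y = sc c x"
      by (auto simp: proj_rel_eq)
    have "sc (iv c) y = sc (iv c * c) x" using xy(4) sc_comp by simp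
    also have "\<dots> = sc 1 x" using iv[OF xy(3)] by (intro sc_cong) (simp add: mult.commute)
    also have "\<dots> = x" using sc_1 xy(1) by (simp add: S_vecs_def)
    finally show "(y, x) \<in> proj_rel p" using xy iv_nd[OF xy(3)] by (auto simp: proj_rel_eq)
  qed
  show "trans (proj_rel p)"
  proof (rule transI)
    fix x y z assume "(x, y) \<in> proj_rel p" "(y, z) \<in> proj_rel p"
    then obtain c c' where h: "x \<in> S_vecs p" "z \<in> S_vecs p" "\<not> int p dvd c" "y = sc c x"
      "\<not> int p dvd c'" "z = sc c' y"
      by (auto simp: proj_rel_eq)
    then have "z = sc (c' * c) x" by (simp add: sc_comp)
    moreover have "\<not> int p dvd c' * c" using h prime_int by (simp add: prime_dvd_mult_iff)
    ultimately show "(x, z) \<in> proj_rel p" using h by (auto simp: proj_rel_eq)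
  qed
qed

lemma class_card: assumes x: "x \<in> S_vecs p" shows "card (proj_rel p `` {x}) = p - 1"
proof -
  let ?C = "{1..int p - 1}"
  have cls: "proj_rel p `` {x} = (\<lambda>c. sc c x) ` ?C"
  proof
    show "proj_rel p `` {x} \<subseteq> (\<lambda>c. sc c x) ` ?C"
    proof
      fix y assume "y \<in> proj_rel p `` {x}"
      then obtain c where c: "\<not> int p dvd c" "y = sc c x" by (auto simp: proj_rel_eq)
      have "y = sc (c mod int p) x" using c(2) sc_cong[of c "c mod int p" x] by (simp add: cong_def)
      moreover have "c mod int p \<in> ?C"
      proof -
        have "0 \<le> c mod int p" "c mod int p < int p" using p_gt by simp_all
        moreover have "c mod int p \<noteq> 0" using c(1) by (simp add: dvd_eq_mod_eq_0)
        ultimately show ?thesis by simp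
      qed
      ultimately show "y \<in> (\<lambda>c. sc c x) ` ?C" by blast
    qed
  next
    show "(\<lambda>c. sc c x) ` ?C \<subseteq> proj_rel p `` {x}"
    proof
      fix y assume "y \<in> (\<lambda>c. sc c x) ` ?C"
      then obtain c where c: "c \<in> ?C" "y = sc c x" by auto
      have nd: "\<not> int p dvd c" using c(1) zdvd_not_zless[of c "int p"] by auto
      then have "y \<in> S_vecs p" using sc_S[OF x] c by simp
      then show "y \<in> proj_rel p `` {x}" using x nd c by (auto simp: proj_rel_eq)
    qed
  qed
  have inj: "inj_on (\<lambda>c. sc c x) ?C"
  proof
    fix c c' assume cc: "c \<in> ?C" "c' \<in> ?C" "sc c x = sc c' x"
    obtain i where i: "i \<in> {0..5}" "x i \<noteq> 0" using x by (auto simp: S_vecs_def)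
    have xP: "x \<in> PiE {0..5} (\<lambda>_. {0..<int p})" using x by (simp add: S_vecs_def)
    have xiR: "x i \<in> R" using PiE_mem[OF xP i(1)] by (simp add: R_def)
    have nd: "\<not> int p dvd x i" using R_nd0[OF xiR i(2)] .
    have "sc c x i = sc c' x i" using cc(3) by simp
    then have "(c * x i) mod int p = (c' * x i) mod int p"
      using i(1) unfolding sc_def by simp
    then have "int p dvd c * x i - c' * x i" by (simp add: mod_eq_dvd_iff)
    then have "int p dvd (c - c') * x i" by (simp add: left_diff_distrib)
    then have "int p dvd (c - c')" using nd prime_int by (simp add: prime_dvd_mult_iff)
    moreover have "c \<in> R" "c' \<in> R" using cc by (auto simp: R_def)
    ultimately show "c = c'" using R_diff_dvd by blast
  qed
  have "card (proj_rel p `` {x}) = card ?C" using cls card_image[OF inj] by simp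
  also have "card ?C = p - 1" by simp
  finally show ?thesis .
qed

lemma card_S_eq: "int (card_S p) * (int p - 1) = Tot - 1"
proof -
  have fin: "finite (S_vecs p)" using finite_Sol S_vecs_eq by simp
  have "(p - 1) * card (S_vecs p // proj_rel p) = card (\<Union>(S_vecs p // proj_rel p))"
  proof (rule card_partition)
    show "finite (S_vecs p // proj_rel p)"
      by (rule finite_quotient[OF fin]) (auto simp: proj_rel_eq)
    show "finite (\<Union>(S_vecs p // proj_rel p))" using Union_quotient[OF equiv_proj] fin by simp
    show "\<And>c. c \<in> S_vecs p // proj_rel p \<Longrightarrow> card c = p - 1"
      by (erule quotientE) (simp add: class_card)
    show "\<And>c1 c2. c1 \<in> S_vecs p // proj_rel p \<Longrightarrow> c2 \<in> S_vecs p // proj_rel p \<Longrightarrow> c1 \<noteq> c2 \<Longrightarrow> c1 \<inter> c2 = {}"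
      using quotient_disj[OF equiv_proj] by blast
  qed
  also have "\<Union>(S_vecs p // proj_rel p) = S_vecs p" by (rule Union_quotient[OF equiv_proj])
  finally have "(p - 1) * card_S p = card (S_vecs p)" by (simp add: card_S_def)
  then have "int (p - 1) * int (card_S p) = int (card (S_vecs p))" by (metis of_nat_mult)
  then show ?thesis using card_S_vecs p_gt by (simp add: of_nat_diff algebra_simps)
qed

end

context P4
begin

definition sh :: "int \<Rightarrow> int set \<Rightarrow> int set" where
  "sh t A = (\<lambda>x. (x + t) mod int p) ` A"

lemma K_sub: "A \<in> K4_sets p \<Longrightarrow> A \<subseteq> R" by (simp add: K4_sets_def R_def)

lemma sh_inj: "A \<subseteq> R \<Longrightarrow> inj_on (\<lambda>x. (x + t) mod int p) A"
proof
  fix x y assume A: "A \<subseteq> R" and xy: "x \<in> A" "y \<in> A" "(x + t) mod int p = (y + t) mod int p"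
  then have "int p dvd (x + t) - (y + t)" by (simp add: mod_eq_dvd_iff)
  then have "int p dvd x - y" by simp
  then show "x = y" using R_diff_dvd A xy by blast
qed

lemma sh_K: assumes A: "A \<in> K4_sets p" shows "sh t A \<in> K4_sets p"
proof -
  have AR: "A \<subseteq> R" using K_sub[OF A] .
  have "sh t A \<subseteq> {0..<int p}" using p_gt by (auto simp: sh_def)
  moreover have "card (sh t A) = 4"
    using card_image[OF sh_inj[OF AR, of t]] A by (simp add: sh_def K4_sets_def)
  moreover have "\<forall>x\<in>sh t A. \<forall>y\<in>sh t A. x \<noteq> y \<longrightarrow> Legendre (x - y) (int p) = 1"
  proof (intro ballI impI)
    fix x y assume "x \<in> sh t A" "y \<in> sh t A" "x \<noteq> y"
    then obtain a b where ab: "a \<in> A" "b \<in> A" "x = (a + t) mod int p" "y = (b + t) mod int p"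
      by (auto simp: sh_def)
    then have "a \<noteq> b" using \<open>x \<noteq> y\<close> by auto
    then have "Legendre (a - b) (int p) = 1" using A ab by (auto simp: K4_sets_def)
    moreover have "[x - y = a - b] (mod int p)"
    proof -
      have "[x - y = (a + t) - (b + t)] (mod int p)" unfolding ab by (intro cong_diff) simp_all
      then show ?thesis by simp
    qed
    ultimately show "Legendre (x - y) (int p) = 1" using Legendre_cong by metis
  qed
  ultimately show ?thesis by (simp add: K4_sets_def)
qed

lemma sh_sh: "sh s (sh t A) = sh (t + s) A"
  unfolding sh_def image_image by (intro image_cong refl) (simp add: mod_add_left_eq add.assoc)

lemma sh_0: "A \<subseteq> R \<Longrightarrow> sh 0 A = A"
  unfolding sh_def using R_mod by (auto simp: image_iff) (metis R_mod subsetD)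

lemma sh_mod: "sh (t mod int p) A = sh t A"
  unfolding sh_def by (intro image_cong refl) (simp add: mod_add_right_eq)

lemma transl_eq: "transl_rel p = {(A, B). A \<in> K4_sets p \<and> B \<in> K4_sets p \<and> (\<exists>t. B = sh t A)}"
  unfolding transl_rel_def sh_def by simp

lemma equiv_transl: "equiv (K4_sets p) (transl_rel p)"
proof (rule equivI)
  show "transl_rel p \<subseteq> K4_sets p \<times> K4_sets p" by (auto simp: transl_eq)
  show "refl_on (K4_sets p) (transl_rel p)"
  proof (rule refl_onI)
    fix A assume A: "A \<in> K4_sets p"
    then have "A = sh 0 A" using sh_0 K_sub by simp
    then have "\<exists>t. A = sh t A" by blast
    then show "(A, A) \<in> transl_rel p" using A by (simp add: transl_eq)
  qed
  show "sym (transl_rel p)"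
  proof (rule symI)
    fix A B assume "(A, B) \<in> transl_rel p"
    then obtain t where h: "A \<in> K4_sets p" "B \<in> K4_sets p" "B = sh t A" by (auto simp: transl_eq)
    have "sh (-t) B = A" using h sh_sh[of "-t" t A] sh_0[OF K_sub[OF h(1)]] by simp
    then have "\<exists>s. A = sh s B" by metis
    then show "(B, A) \<in> transl_rel p" using h by (simp add: transl_eq)
  qed
  show "trans (transl_rel p)"
  proof (rule transI)
    fix A B C assume "(A, B) \<in> transl_rel p" "(B, C) \<in> transl_rel p"
    then obtain t s where h: "A \<in> K4_sets p" "C \<in> K4_sets p" "B = sh t A" "C = sh s B"
      by (auto simp: transl_eq)
    then have "C = sh (t + s) A" by (simp add: sh_sh)
    then have "\<exists>r. C = sh r A" by blast
    then show "(A, C) \<in> transl_rel p" using h by (simp add: transl_eq)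
  qed
qed

lemma sum_sh: assumes "A \<in> K4_sets p" shows "[\<Sum>(sh t A) = \<Sum>A + 4 * t] (mod int p)"
proof -
  have AR: "A \<subseteq> R" using K_sub[OF assms] .
  have fin: "finite A" using finite_subset[OF AR finR] .
  have c4: "card A = 4" using assms by (simp add: K4_sets_def)
  have "\<Sum>(sh t A) = (\<Sum>x\<in>A. (x + t) mod int p)"
    unfolding sh_def using sum.reindex[OF sh_inj[OF AR, of t], of id] by simp
  also have "[\<dots> = (\<Sum>x\<in>A. x + t)] (mod int p)" by (rule cong_sum) simp
  also have "(\<Sum>x\<in>A. x + t) = \<Sum>A + 4 * t" using c4 by (simp add: sum.distrib)
  finally show ?thesis .
qed

lemma class_card_K: assumes A: "A \<in> K4_sets p" shows "card (transl_rel p `` {A}) = p"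
proof -
  have cls: "transl_rel p `` {A} = (\<lambda>t. sh t A) ` R"
  proof
    show "transl_rel p `` {A} \<subseteq> (\<lambda>t. sh t A) ` R"
    proof
      fix B assume "B \<in> transl_rel p `` {A}"
      then obtain t where "B = sh t A" by (auto simp: transl_eq)
      then have "B = sh (t mod int p) A" by (simp add: sh_mod)
      then show "B \<in> (\<lambda>t. sh t A) ` R" using mod_in_R by blast
    qed
    show "(\<lambda>t. sh t A) ` R \<subseteq> transl_rel p `` {A}"
      using A sh_K by (auto simp: transl_eq)
  qed
  have inj: "inj_on (\<lambda>t. sh t A) R"
  proof
    fix t s assume ts: "t \<in> R" "s \<in> R" "sh t A = sh s A"
    have "[\<Sum>A + 4 * t = \<Sum>A + 4 * s] (mod int p)"
      using sum_sh[OF A, of t] sum_sh[OF A, of s] ts(3) by (metis cong_sym cong_trans)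
    then have "int p dvd (\<Sum>A + 4 * t) - (\<Sum>A + 4 * s)" by (simp add: cong_iff_dvd_diff)
    moreover have "(\<Sum>A + 4 * t) - (\<Sum>A + 4 * s) = 4 * (t - s)" by (simp add: algebra_simps)
    ultimately have "int p dvd 4 * (t - s)" by simp
    moreover have "\<not> int p dvd 4" using p_gt zdvd_not_zless[of 4 "int p"] by simp
    ultimately have "int p dvd t - s" using prime_dvd_mult_iff[OF prime_int, of 4 "t - s"] by blast
    then show "t = s" using R_diff_dvd ts by blast
  qed
  show ?thesis using cls card_image[OF inj] cardR by simp
qed

lemma finite_K: "finite (K4_sets p)"
proof -
  have "K4_sets p \<subseteq> Pow R" using K_sub by auto
  then show ?thesis by (rule finite_subset) simp
qed

lemma card_K: "card (K4_sets p) = p * n_K4 p"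
proof -
  have "p * card (K4_sets p // transl_rel p) = card (\<Union>(K4_sets p // transl_rel p))"
  proof (rule card_partition)
    show "finite (K4_sets p // transl_rel p)"
      by (rule finite_quotient[OF finite_K]) (auto simp: transl_eq)
    show "finite (\<Union>(K4_sets p // transl_rel p))" using Union_quotient[OF equiv_transl] finite_K by simp
    show "\<And>c. c \<in> K4_sets p // transl_rel p \<Longrightarrow> card c = p"
      by (erule quotientE) (simp add: class_card_K)
    show "\<And>c1 c2. c1 \<in> K4_sets p // transl_rel p \<Longrightarrow> c2 \<in> K4_sets p // transl_rel p \<Longrightarrow> c1 \<noteq> c2 \<Longrightarrow> c1 \<inter> c2 = {}"
      using quotient_disj[OF equiv_transl] by blast
  qed
  then show ?thesis using Union_quotient[OF equiv_transl] by (simp add: n_K4_def)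
qed

end

context P4
begin

definition Perms :: "int set \<Rightarrow> int list set" where
  "Perms A = {xs. length xs = 4 \<and> distinct xs \<and> set xs \<subseteq> A}"

lemma card_Perms: assumes "A \<in> K4_sets p" shows "card (Perms A) = 24"
proof -
  have fin: "finite A" using finite_subset[OF K_sub[OF assms] finR] .
  have c4: "card A = 4" using assms by (simp add: K4_sets_def)
  have "card (Perms A) = \<Prod>{card A - 4 + 1 .. card A}"
    unfolding Perms_def by (rule card_lists_distinct_length_eq[OF fin]) (simp add: c4)
  also have "\<dots> = 24" using c4 by (simp add: numeral_eq_Suc atLeastAtMostSuc_conv)
  finally show ?thesis .
qed

lemma Perms_set: assumes "A \<in> K4_sets p" "xs \<in> Perms A" shows "set xs = A"
proof -
  have fin: "finite A" using finite_subset[OF K_sub[OF assms(1)] finR] .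
  have c4: "card A = 4" using assms by (simp add: K4_sets_def)
  have "card (set xs) = 4" using assms(2) distinct_card by (fastforce simp: Perms_def)
  then show ?thesis using assms(2) c4 fin by (intro card_subset_eq) (auto simp: Perms_def)
qed

definition L :: "int list set" where "L = (\<Union>A\<in>K4_sets p. Perms A)"

lemma finite_Perms: "finite (Perms A)" if "A \<in> K4_sets p"
  using card_Perms[OF that] card.infinite by fastforce

lemma card_L: "card L = 24 * card (K4_sets p)"
proof -
  have "card L = (\<Sum>A\<in>K4_sets p. card (Perms A))"
    unfolding L_def
  proof (rule card_UN_disjoint[OF finite_K])
    show "\<forall>A\<in>K4_sets p. finite (Perms A)" using finite_Perms by blast
    show "\<forall>A\<in>K4_sets p. \<forall>B\<in>K4_sets p. A \<noteq> B \<longrightarrow> Perms A \<inter> Perms B = {}"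
      using Perms_set by blast
  qed
  also have "\<dots> = (\<Sum>A\<in>K4_sets p. 24)" using card_Perms by simp
  finally show ?thesis by simp
qed

definition Trip :: "(int \<times> int \<times> int) set" where
  "Trip = {t \<in> R \<times> R \<times> R. case t of (u, v, w) \<Rightarrow>
      Q u \<and> Q v \<and> Q w \<and> Q (u - v) \<and> Q (u - w) \<and> Q (v - w)}"

lemma card_Trip: "int (card Trip) = M3"
proof -
  have "int (card Trip) = (\<Sum>t\<in>R \<times> R \<times> R. if (case t of (u, v, w) \<Rightarrow>
      Q u \<and> Q v \<and> Q w \<and> Q (u - v) \<and> Q (u - w) \<and> Q (v - w)) then 1 else 0)"
    unfolding Trip_def using sum_ind[of "R \<times> R \<times> R" _ 1] by simp
  also have "\<dots> = M3"
    unfolding M3_def by (simp add: sum.cartesian_product split_def)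
  finally show ?thesis .
qed

definition Phi :: "int \<times> int \<times> int \<times> int \<Rightarrow> int list" where
  "Phi t = (case t of (a, u, v, w) \<Rightarrow> map (\<lambda>r. (a + r) mod int p) [0, u, v, w])"

lemma Trip_Q:
  assumes "(u, v, w) \<in> Trip" "r \<in> {0, u, v, w}" "s \<in> {0, u, v, w}" "r \<noteq> s"
  shows "Q (r - s)"
proof -
  have h: "Q u" "Q v" "Q w" "Q (u - v)" "Q (u - w)" "Q (v - w)" using assms(1) by (auto simp: Trip_def)
  have h2: "Q (-u)" "Q (-v)" "Q (-w)" "Q (v - u)" "Q (w - u)" "Q (w - v)"
    using h Q_neg Q_swap by auto
  show ?thesis using assms(2-4) h h2 by auto
qed

lemma Phi_L: assumes a: "a \<in> R" and t: "(u, v, w) \<in> Trip" shows "Phi (a, u, v, w) \<in> L"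
proof -
  let ?f = "\<lambda>r. (a + r) mod int p"
  let ?S = "{0, u, v, w}"
  have inj: "inj_on ?f ?S"
  proof (rule inj_onI)
    fix r s assume rs: "r \<in> ?S" "s \<in> ?S" "(a + r) mod int p = (a + s) mod int p"
    show "r = s"
    proof (rule ccontr)
      assume "r \<noteq> s"
      then have "Q (r - s)" using Trip_Q[OF t rs(1,2)] by simp
      moreover have "int p dvd (a + r) - (a + s)" using rs(3) by (simp add: mod_eq_dvd_iff)
      ultimately show False using Q_nz by simp
    qed
  qed
  have h: "Q u" "Q v" "Q w" "Q (u - v)" "Q (u - w)" "Q (v - w)" using t by (auto simp: Trip_def)
  have d0: "distinct [0, u, v, w]"
    using Q_R_nz[OF h(1)] Q_R_nz[OF h(2)] Q_R_nz[OF h(3)] Q_R_nz[OF h(4)] Q_R_nz[OF h(5)] Q_R_nz[OF h(6)]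
    by auto
  have dist: "distinct (Phi (a, u, v, w))"
    unfolding Phi_def using inj d0 by (simp add: distinct_map)
  let ?A = "set (Phi (a, u, v, w))"
  have len: "length (Phi (a, u, v, w)) = 4" by (simp add: Phi_def)
  have AK: "?A \<in> K4_sets p"
  proof -
    have "?A \<subseteq> {0..<int p}" using p_gt by (auto simp: Phi_def)
    moreover have "card ?A = 4" using distinct_card[OF dist] len by simp
    moreover have "\<forall>x\<in>?A. \<forall>y\<in>?A. x \<noteq> y \<longrightarrow> Legendre (x - y) (int p) = 1"
    proof (intro ballI impI)
      fix x y assume xy: "x \<in> ?A" "y \<in> ?A" "x \<noteq> y"
      have setA: "?A = ?f ` ?S"
      proof -
        have "Phi (a, u, v, w) = map ?f [0, u, v, w]" unfolding Phi_def by (simp only: prod.case)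
        then show ?thesis by (simp only: list.set_map list.set)
      qed
      obtain r where r: "r \<in> ?S" "x = ?f r" using xy(1) unfolding setA by (rule imageE) simp
      obtain s where s: "s \<in> ?S" "y = ?f s" using xy(2) unfolding setA by (rule imageE) simp
      have rs: "r \<in> ?S" "s \<in> ?S" "x = ?f r" "y = ?f s" using r s by simp_all
      then have "r \<noteq> s" using xy(3) by auto
      then have "Q (r - s)" using Trip_Q[OF t rs(1,2)] by simp
      moreover have "[x - y = (a + r) - (a + s)] (mod int p)" unfolding rs by (intro cong_diff) simp_all
      ultimately show "Legendre (x - y) (int p) = 1" using Q_cong by (simp add: Q_def Legendre_cong)
    qed
    ultimately show ?thesis by (simp add: K4_sets_def)
  qed
  have "Phi (a, u, v, w) \<in> Perms ?A" using dist len by (simp add: Perms_def)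
  then show ?thesis using AK by (auto simp: L_def)
qed

lemma bij_Phi: "bij_betw Phi (R \<times> Trip) L"
proof -
  have inj: "inj_on Phi (R \<times> Trip)"
  proof
    fix x y assume x: "x \<in> R \<times> Trip" and y: "y \<in> R \<times> Trip" and e: "Phi x = Phi y"
    obtain a u v w where xx: "x = (a, u, v, w)" by (metis prod.exhaust)
    obtain a' u' v' w' where yy: "y = (a', u', v', w')" by (metis prod.exhaust)
    have R: "a \<in> R" "u \<in> R" "v \<in> R" "w \<in> R" "a' \<in> R" "u' \<in> R" "v' \<in> R" "w' \<in> R"
      using x y unfolding xx yy by (auto simp: Trip_def)
    have e': "a mod int p = a' mod int p" "(a + u) mod int p = (a' + u') mod int p"
      "(a + v) mod int p = (a' + v') mod int p" "(a + w) mod int p = (a' + w') mod int p"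
      using e unfolding xx yy Phi_def by simp_all
    have aa: "a = a'" using e'(1) R R_mod by simp
    have "\<And>z z'. z \<in> R \<Longrightarrow> z' \<in> R \<Longrightarrow> (a + z) mod int p = (a + z') mod int p \<Longrightarrow> z = z'"
    proof -
      fix z z' assume zz: "z \<in> R" "z' \<in> R" "(a + z) mod int p = (a + z') mod int p"
      then have "int p dvd (a + z) - (a + z')" by (simp add: mod_eq_dvd_iff)
      then have "int p dvd z - z'" by simp
      then show "z = z'" using R_diff_dvd zz by blast
    qed
    then have "u = u'" "v = v'" "w = w'" using e' R aa by auto
    then show "x = y" unfolding xx yy using aa by simp
  qed
  have sub1: "Phi ` (R \<times> Trip) \<subseteq> L"
    using Phi_L by auto
  have sub2: "L \<subseteq> Phi ` (R \<times> Trip)"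
  proof
    fix xs assume "xs \<in> L"
    then obtain A where A: "A \<in> K4_sets p" "xs \<in> Perms A" by (auto simp: L_def)
    have sA: "set xs = A" using Perms_set[OF A] .
    have len: "length xs = 4" and dist: "distinct xs" using A(2) by (auto simp: Perms_def)
    obtain x0 x1 x2 x3 where xs: "xs = [x0, x1, x2, x3]"
      using len by (auto simp: numeral_eq_Suc length_Suc_conv)
    have inR: "x0 \<in> R" "x1 \<in> R" "x2 \<in> R" "x3 \<in> R" using sA K_sub[OF A(1)] xs by auto
    have ne: "x0 \<noteq> x1" "x0 \<noteq> x2" "x0 \<noteq> x3" "x1 \<noteq> x2" "x1 \<noteq> x3" "x2 \<noteq> x3"
      using dist xs by auto
    have LQ: "\<And>x y. x \<in> A \<Longrightarrow> y \<in> A \<Longrightarrow> x \<noteq> y \<Longrightarrow> Q (x - y)"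
      using A(1) by (auto simp: K4_sets_def Q_def)
    have x_A: "x0 \<in> A" "x1 \<in> A" "x2 \<in> A" "x3 \<in> A" using sA xs by auto
    define u where "u = (x1 - x0) mod int p"
    define v where "v = (x2 - x0) mod int p"
    define w where "w = (x3 - x0) mod int p"
    have cu: "[u = x1 - x0] (mod int p)" "[v = x2 - x0] (mod int p)" "[w = x3 - x0] (mod int p)"
      by (simp_all add: u_def v_def w_def)
    have Qs: "Q u" "Q v" "Q w" using cu LQ x_A ne Q_cong by metis+
    have "[u - v = x1 - x2] (mod int p)" using cong_diff[OF cu(1) cu(2)] by simp
    then have Q1: "Q (u - v)" using LQ x_A ne Q_cong by metis
    have "[u - w = x1 - x3] (mod int p)" using cong_diff[OF cu(1) cu(3)] by simp
    then have Q2: "Q (u - w)" using LQ x_A ne Q_cong by metis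
    have "[v - w = x2 - x3] (mod int p)" using cong_diff[OF cu(2) cu(3)] by simp
    then have Q3: "Q (v - w)" using LQ x_A ne Q_cong by metis
    have T: "(u, v, w) \<in> Trip" using Qs Q1 Q2 Q3 by (simp add: Trip_def u_def v_def w_def mod_in_R)
    have hback: "\<And>y. y \<in> R \<Longrightarrow> (x0 + (y - x0) mod int p) mod int p = y"
    proof -
      fix y assume yR: "y \<in> R"
      have "(x0 + (y - x0) mod int p) mod int p = (x0 + (y - x0)) mod int p" by (simp add: mod_add_right_eq)
      then show "(x0 + (y - x0) mod int p) mod int p = y" using R_mod[OF yR] by simp
    qed
    have "Phi (x0, u, v, w) = xs"
      unfolding Phi_def xs u_def v_def w_def using hback inR R_mod by simp
    then show "xs \<in> Phi ` (R \<times> Trip)" using inR(1) T by force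
  qed
  show ?thesis using inj sub1 sub2 by (auto simp: bij_betw_def)
qed

lemma K4_count: "24 * int (n_K4 p) = M3"
proof -
  have "card L = card (R \<times> Trip)" using bij_betw_same_card[OF bij_Phi] by simp
  then have "24 * (p * n_K4 p) = p * card Trip" using card_L card_K cardR
    by (simp add: card_cartesian_product)
  then have "p * (24 * n_K4 p) = p * card Trip" by (simp add: ac_simps)
  then have "24 * n_K4 p = card Trip" using p_gt by simp
  then show ?thesis using card_Trip by (metis of_nat_mult of_nat_numeral)
qed

end

theorem lemma4p2:
  fixes p k :: nat
  assumes "prime p" and "p = 4 * k + 1"
  shows "(of_nat (n_K4 p) :: rat) =
           (of_nat k * (of_nat k - 1) * (of_nat k - 4) + 2 * of_nat k * d p k) / 24
         \<longleftrightarrow> int (card_S p) = (int p + 1) ^ 2 + J p k ^ 2"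
proof -
  interpret P4 p k using assms by unfold_locales
  define n where "n = n_K4 p"
  define c where "c = card_S p"
  define j where "j = J p k"
  have K: "24 * int n = M3" using K4_count by (simp add: n_def)
  have S: "int c * (int p - 1) = Tot - 1" using card_S_eq by (simp add: c_def)
  have kpos: "int k > 0" using k_pos by simp
  have ck: "4 * int k * int c = 4 * (384 * int n) + 384 * int k ^ 2 - 224 * int k"
    using S Tot_eq K assms(2) by (simp add: algebra_simps)
  define A where "A = 16 * int k * (int k - 1) * (int k - 4) + int k * (j ^ 2 - 4)"
  have L: "((of_nat n :: rat) = (of_nat k * (of_nat k - 1) * (of_nat k - 4) + 2 * of_nat k * d p k) / 24)
      \<longleftrightarrow> (of_int (384 * int n) :: rat) = of_int A"
    unfolding A_def d_def j_def by (simp add: field_simps) (rule iffI; linarith)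
  also have "\<dots> \<longleftrightarrow> 384 * int n = A" by (rule of_int_eq_iff)
  also have "\<dots> \<longleftrightarrow> 4 * int k * int c = 4 * int k * ((int p + 1) ^ 2 + j ^ 2)"
  proof -
    have "4 * int k * ((int p + 1) ^ 2 + j ^ 2) = 4 * A + 384 * int k ^ 2 - 224 * int k"
      unfolding A_def using assms(2) by (simp add: algebra_simps power2_eq_square)
    then show ?thesis using ck by simp
  qed
  also have "\<dots> \<longleftrightarrow> int c = (int p + 1) ^ 2 + j ^ 2" using kpos by simp
  finally show ?thesis by (simp add: n_def c_def j_def)
qed

end
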